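(* Let $m\ge1$, $M=2^m$, $N\ge1$, and let bit probabilities $P_{C_0}(0),\ldots,P_{C_{m-1}}(0)\in(0,1)$ be given, with $P_{C_k}(1)=1-P_{C_k}(0)$. Let $\mathbb{X}$ have rows $\boldsymbol{x}_0,\ldots,\boldsymbol{x}_{M-1}\in\mathbb{R}^N$, let $\mathbb{S}=\mathring{\mathbb{X}}$ be its transform (rows $\boldsymbol{s}_i=\sum_{j}\boldsymbol{x}_j\gamma_{i,j}\sqrt{P_j}$), and let $\tilde{\mathbb{X}}$ and $\tilde{\mathbb{S}}$ be the Hadamard transforms of $\mathbb{X}$ and $\mathbb{S}$. Then $$\tilde{\boldsymbol{s}}_i=\psi_i\sum_{j=0}^{M-1}\tilde{\boldsymbol{x}}_j\prod_{\substack{k=0\\ n_{j,k}\ne n_{i,k}}}^{m-1}\big(P_{C_k}(0)-P_{C_k}(n_{j,k})\big),\qquad i=0,\ldots,M-1,$$ $$\tilde{\boldsymbol{x}}_j=\sum_{i=0}^{M-1}\frac{\tilde{\boldsymbol{s}}_i}{\psi_i}\prod_{\substack{k=0\\ n_{i,k}\ne n_{j,k}}}^{m-1}\big(P_{C_k}(n_{i,k})-P_{C_k}(0)\big),\qquad j=0,\ldots,M-1,$$ where $\psi_i=\prod_{k:\,n_{i,k}=1}2\sqrt{P_{C_k}(0)P_{C_k}(1)}$ and a product over the empty set equals $1$.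
   Context: For an integer $0\le i\le M-1$, $n_{i,k}\in\{0,1\}$ denotes the $k$-th bit of its base-2 representation ($i=\sum_k n_{i,k}2^k$); $\bar b=1-b$ for a bit $b$. Symbol probabilities: $P_i=\prod_{k=0}^{m-1}P_{C_k}(n_{i,k})$. Coefficients: $\gamma_{i,j}=\prod_{k=0}^{m-1}\big[(-1)^{\bar n_{i,k}n_{j,k}}\sqrt{P_{C_k}(0)}+(-1)^{n_{i,k}\bar n_{j,k}}\sqrt{P_{C_k}(1)}\big]$. Hadamard coefficients: $h_{i,j}=\prod_{k=0}^{m-1}(-1)^{n_{i,k}n_{j,k}}$. The Hadamard transform of a matrix with rows $\boldsymbol{x}_0,\ldots,\boldsymbol{x}_{M-1}$ is the matrix with rows $\tilde{\boldsymbol{x}}_i=\frac1M\sum_{j=0}^{M-1}\boldsymbol{x}_jh_{i,j}$. *)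

theory Defs
  imports "HOL-Analysis.Analysis"
begin

definition nbit :: "nat \<Rightarrow> nat \<Rightarrow> nat" where
  "nbit i k = (i div 2 ^ k) mod 2"

definition bbar :: "nat \<Rightarrow> nat" where
  "bbar b = 1 - b"

definition PC :: "(nat \<Rightarrow> real) \<Rightarrow> nat \<Rightarrow> nat \<Rightarrow> real" where
  "PC p k b = (if b = 0 then p k else 1 - p k)"

definition Psym :: "(nat \<Rightarrow> real) \<Rightarrow> nat \<Rightarrow> nat \<Rightarrow> real" where
  "Psym p m i = (\<Prod>k<m. PC p k (nbit i k))"

definition gam :: "(nat \<Rightarrow> real) \<Rightarrow> nat \<Rightarrow> nat \<Rightarrow> nat \<Rightarrow> real" where
  "gam p m i j = (\<Prod>k<m.
      (-1) ^ (bbar (nbit i k) * nbit j k) * sqrt (PC p k 0)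
    + (-1) ^ (nbit i k * bbar (nbit j k)) * sqrt (PC p k 1))"

definition had :: "nat \<Rightarrow> nat \<Rightarrow> nat \<Rightarrow> real" where
  "had m i j = (\<Prod>k<m. (-1) ^ (nbit i k * nbit j k))"

definition hadamard_tr :: "nat \<Rightarrow> (nat \<Rightarrow> 'a::real_vector) \<Rightarrow> nat \<Rightarrow> 'a" where
  "hadamard_tr m X i = (1 / 2 ^ m) *\<^sub>R (\<Sum>j<2 ^ m. had m i j *\<^sub>R X j)"

definition ring_tr :: "(nat \<Rightarrow> real) \<Rightarrow> nat \<Rightarrow> (nat \<Rightarrow> 'a::real_vector) \<Rightarrow> nat \<Rightarrow> 'a" where
  "ring_tr p m X i = (\<Sum>j<2 ^ m. (gam p m i j * sqrt (Psym p m j)) *\<^sub>R X j)"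

definition psi :: "(nat \<Rightarrow> real) \<Rightarrow> nat \<Rightarrow> nat \<Rightarrow> real" where
  "psi p m i = (\<Prod>k\<in>{k. k < m \<and> nbit i k = 1}. 2 * sqrt (PC p k 0 * PC p k 1))"

end

theory Submission imports Defs begin

lemma sum_split_double:
  fixes g :: "nat \<Rightarrow> 'a::comm_monoid_add"
  shows "(\<Sum>j<n+n. g j) = (\<Sum>j<n. g j) + (\<Sum>j<n. g (n+j))"
proof -
  have "(\<Sum>j<n+n. g j) = (\<Sum>j\<in>{0..<n}. g j) + (\<Sum>j\<in>{n..<n+n}. g j)"
    using sum.atLeastLessThan_concat[of 0 n "n+n" g] by (simp add: atLeast0LessThan)
  also have "(\<Sum>j\<in>{n..<n+n}. g j) = (\<Sum>j<n. g (n+j))"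
    using sum.shift_bounds_nat_ivl[of g 0 n n] by (simp add: atLeast0LessThan add.commute)
  finally show ?thesis by (simp add: atLeast0LessThan)
qed

lemma nbit_low: "j < 2^m \<Longrightarrow> nbit j m = 0"
  by (simp add: nbit_def)

lemma nbit_high: "j < 2^m \<Longrightarrow> nbit (2^m + j) m = 1"
  by (simp add: nbit_def)

lemma nbit_shift: "k < m \<Longrightarrow> nbit (2^m + j) k = nbit j k"
proof -
  assume k: "k < m"
  have "(2::nat)^m = 2^k * 2^(m-k)" using k by (simp add: power_add[symmetric])
  then have "(2^m + j) div 2^k = 2^(m-k) + j div 2^k" by simp
  moreover obtain c where "(2::nat)^(m-k) = 2*c" using k
    by (metis dvd_def dvd_power zero_less_diff)
  ultimately show ?thesis by (simp add: nbit_def)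
qed

lemma nbit_lt2: "nbit j k < 2" by (simp add: nbit_def)

lemma sum_prod_bits:
  fixes f :: "nat \<Rightarrow> nat \<Rightarrow> 'a::comm_semiring_1"
  shows "(\<Sum>j<2^m. \<Prod>k<m. f k (nbit j k)) = (\<Prod>k<m. f k 0 + f k 1)"
proof (induction m)
  case 0 then show ?case by simp
next
  case (Suc m)
  have "(\<Sum>j<2^Suc m. \<Prod>k<Suc m. f k (nbit j k))
      = (\<Sum>j<2^m. \<Prod>k<Suc m. f k (nbit j k)) + (\<Sum>j<2^m. \<Prod>k<Suc m. f k (nbit (2^m+j) k))"
    using sum_split_double[of "\<lambda>j. \<Prod>k<Suc m. f k (nbit j k)" "2^m"] by (simp add: mult_2)
  also have "(\<Sum>j<2^m. \<Prod>k<Suc m. f k (nbit j k)) = (\<Sum>j<2^m. (\<Prod>k<m. f k (nbit j k)) * f m 0)"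
    by (rule sum.cong) (simp_all add: nbit_low)
  also have "(\<Sum>j<2^m. \<Prod>k<Suc m. f k (nbit (2^m+j) k)) = (\<Sum>j<2^m. (\<Prod>k<m. f k (nbit j k)) * f m 1)"
    by (rule sum.cong) (simp_all add: nbit_high nbit_shift)
  finally show ?case using Suc by (simp add: sum_distrib_right[symmetric] distrib_left)
qed

lemma sqrt_prod: fixes m :: nat shows "sqrt (\<Prod>k<m. f k) = (\<Prod>k<m. sqrt (f k))"
  by (induction m) (simp_all add: real_sqrt_mult)

lemma lin:
  fixes X :: "nat \<Rightarrow> 'a::real_vector"
  shows "(\<Sum>j\<in>A. c j *\<^sub>R (\<Sum>l\<in>B. d j l *\<^sub>R X l)) = (\<Sum>l\<in>B. (\<Sum>j\<in>A. c j * d j l) *\<^sub>R X l)"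
  by (simp add: scaleR_sum_right scaleR_sum_left sum.swap[of _ A] )

lemma bits_eq:
  assumes "j < 2^m" "l < 2^m" "\<forall>k<m. nbit j k = nbit l k"
  shows "j = l"
proof (rule bit_eqI)
  fix n
  show "bit j n = bit l n"
  proof (cases "n < m")
    case True
    then have "nbit j n = nbit l n" using assms(3) by blast
    then show ?thesis by (simp add: bit_iff_odd nbit_def odd_iff_mod_2_eq_one)
  next
    case False
    then have "(2::nat)^m \<le> 2^n" by simp
    then have "j < 2^n" "l < 2^n" using assms(1,2) by (meson less_le_trans)+
    then have "j div 2^n = 0" "l div 2^n = 0" by simp_all
    then show ?thesis by (simp add: bit_iff_odd)
  qed
qed

lemma delta_prod:
  assumes "j < 2^m" "l < 2^m"
  shows "(\<Prod>k<m. (if nbit j k = nbit l k then 1 else 0::real)) = (if j = l then 1 else 0)"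
proof (cases "j = l")
  case True then show ?thesis by simp
next
  case False
  then obtain k where "k < m" "nbit j k \<noteq> nbit l k" using bits_eq[OF assms] by blast
  then show ?thesis using False by (auto intro!: prod_zero)
qed

lemma bit01: "(b::nat) < 2 \<Longrightarrow> b = 0 \<or> b = 1" by auto

lemma perbit1:
  fixes q :: real and x z :: nat
  assumes q: "0 < q" "q < 1" and x: "x < 2" and z: "z < 2"
  defines "P \<equiv> (\<lambda>b::nat. if b = 0 then q else 1 - q)"
  shows "(\<Sum>y<2. 1/2 * (-1)^(x*y) * ((-1)^(bbar y * z) * sqrt (P 0) + (-1)^(y * bbar z) * sqrt (P 1)) * sqrt (P z))
       = (\<Sum>y<2. (if x = 1 then 2 * sqrt(P 0 * P 1) else 1) * ((if y \<noteq> x then P 0 - P y else 1) * (1/2 * (-1)^(y*z))))"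
proof -
  have a: "sqrt q * sqrt q = q" using q by simp
  have b: "sqrt (1-q) * sqrt (1-q) = 1 - q" using q by simp
  have s: "sqrt (q * (1-q)) = sqrt q * sqrt (1-q)" by (simp add: real_sqrt_mult)
  have s2: "sqrt (q - q*q) = sqrt q * sqrt (1-q)" by (simp add: real_sqrt_mult[symmetric] algebra_simps)
  have ab: "\<bar>q\<bar> = q" "\<bar>1-q\<bar> = 1-q" using q by auto
  have n2: "{..<2::nat} = {0,1}" by auto
  show ?thesis using bit01[OF x] bit01[OF z]
    by (auto simp: n2 P_def bbar_def s s2 ab algebra_simps a b) (simp_all add: field_simps)
qed

lemma perbit2:
  fixes q :: real and z w :: nat
  assumes z: "z < 2" and w: "w < 2"
  defines "P \<equiv> (\<lambda>b::nat. if b = 0 then q else 1 - q)"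
  shows "(\<Sum>y<2. (if y \<noteq> z then P y - P 0 else 1) * (if w \<noteq> y then P 0 - P w else 1))
       = (if z = w then 1 else 0)"
proof -
  have n2: "{..<2::nat} = {0,1}" by auto
  show ?thesis using bit01[OF z] bit01[OF w]
    by (auto simp: n2 P_def)
qed

lemma had_sum: "hadamard_tr m Y i = (\<Sum>j<2^m. (1/2^m * had m i j) *\<^sub>R Y j)"
  by (simp add: hadamard_tr_def scaleR_sum_right)

lemma half_pow: "(1/2^m::real) = (\<Prod>k<m. 1/2)"
  by (simp add: power_one_over)

lemma psi_prod: "psi p m i = (\<Prod>k<m. if nbit i k = 1 then 2 * sqrt (PC p k 0 * PC p k 1) else 1)"
proof -
  have "{k. k < m \<and> nbit i k = 1} = {k\<in>{..<m}. nbit i k = 1}" by auto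
  then have "psi p m i = (\<Prod>k\<in>{k\<in>{..<m}. nbit i k = 1}. 2 * sqrt (PC p k 0 * PC p k 1))"
    unfolding psi_def by simp
  also have "\<dots> = (\<Prod>k<m. if nbit i k = 1 then 2 * sqrt (PC p k 0 * PC p k 1) else 1)"
    by (rule prod.inter_filter) simp
  finally show ?thesis .
qed

lemma D_prod: "(\<Prod>k\<in>{k. k < m \<and> nbit j k \<noteq> nbit i k}. g k) = (\<Prod>k<m. if nbit j k \<noteq> nbit i k then g k else 1)"
proof -
  have "{k. k < m \<and> nbit j k \<noteq> nbit i k} = {k\<in>{..<m}. nbit j k \<noteq> nbit i k}" by auto
  then have "(\<Prod>k\<in>{k. k < m \<and> nbit j k \<noteq> nbit i k}. g k) = (\<Prod>k\<in>{k\<in>{..<m}. nbit j k \<noteq> nbit i k}. g k)"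
    by simp
  also have "\<dots> = (\<Prod>k<m. if nbit j k \<noteq> nbit i k then g k else 1)"
    by (rule prod.inter_filter) simp
  finally show ?thesis .
qed

theorem theorem2:
  fixes m :: nat and p :: "nat \<Rightarrow> real" and X :: "nat \<Rightarrow> real ^ 'n"
  assumes "m \<ge> 1"
    and "\<And>k. k < m \<Longrightarrow> 0 < p k \<and> p k < 1"
  shows "(\<forall>i < 2 ^ m.
           hadamard_tr m (ring_tr p m X) i =
             psi p m i *\<^sub>R (\<Sum>j<2 ^ m.
               (\<Prod>k\<in>{k. k < m \<and> nbit j k \<noteq> nbit i k}. PC p k 0 - PC p k (nbit j k))
                 *\<^sub>R hadamard_tr m X j))
       \<and> (\<forall>j < 2 ^ m.
           hadamard_tr m X j =
             (\<Sum>i<2 ^ m.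
               ((1 / psi p m i) *
                 (\<Prod>k\<in>{k. k < m \<and> nbit i k \<noteq> nbit j k}. PC p k (nbit i k) - PC p k 0))
                 *\<^sub>R hadamard_tr m (ring_tr p m X) i))"
proof -
  define D where "D i j = (\<Prod>k\<in>{k. k < m \<and> nbit j k \<noteq> nbit i k}. PC p k 0 - PC p k (nbit j k))" for i j
  define E where "E i j = (\<Prod>k\<in>{k. k < m \<and> nbit i k \<noteq> nbit j k}. PC p k (nbit i k) - PC p k 0)" for i j
  define F where "F k x y z = 1/2 * (-1)^(x*y) * ((-1)^(bbar y * z) * sqrt (PC p k 0) + (-1)^(y * bbar z) * sqrt (PC p k 1)) * sqrt (PC p k z)" for k x y z
  define G where "G k x y z = (if x = 1 then 2 * sqrt(PC p k 0 * PC p k 1) else 1) * ((if y \<noteq> x then PC p k 0 - PC p k y else 1) * (1/2 * (-1::real)^(y*z)))" for k x y z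
  have FG: "F k x 0 z + F k x 1 z = G k x 0 z + G k x 1 z" if "k < m" "x < 2" "z < 2" for k x z
  proof -
    have PCe: "PC p k = (\<lambda>b. if b = 0 then p k else 1 - p k)" by (simp add: PC_def fun_eq_iff)
    have n2: "{..<2::nat} = {0,1}" by auto
    from perbit1[of "p k" x z] assms(2)[OF that(1)] that(2,3)
    show ?thesis unfolding F_def G_def PCe by (simp add: n2)
  qed
  have psi_nz: "psi p m i \<noteq> 0" for i
  proof -
    have "psi p m i > 0" unfolding psi_def
      by (rule prod_pos) (use assms(2) in \<open>auto simp: PC_def\<close>)
    then show ?thesis by simp
  qed
  have part1: "hadamard_tr m (ring_tr p m X) i = psi p m i *\<^sub>R (\<Sum>j<2 ^ m. D i j *\<^sub>R hadamard_tr m X j)" for i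
  proof -
    have L: "hadamard_tr m (ring_tr p m X) i =
        (\<Sum>l<2^m. (\<Sum>j<2^m. (1/2^m * had m i j) * (gam p m j l * sqrt (Psym p m l))) *\<^sub>R X l)"
      unfolding had_sum ring_tr_def by (rule lin)
    have R: "psi p m i *\<^sub>R (\<Sum>j<2 ^ m. D i j *\<^sub>R hadamard_tr m X j) =
        (\<Sum>l<2^m. (\<Sum>j<2^m. psi p m i * D i j * (1/2^m * had m j l)) *\<^sub>R X l)"
    proof -
      have "psi p m i *\<^sub>R (\<Sum>j<2 ^ m. D i j *\<^sub>R hadamard_tr m X j) =
          psi p m i *\<^sub>R (\<Sum>l<2^m. (\<Sum>j<2^m. D i j * (1/2^m * had m j l)) *\<^sub>R X l)"
        unfolding had_sum by (subst lin) (rule refl)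
      also have "\<dots> = (\<Sum>l<2^m. (\<Sum>j<2^m. psi p m i * D i j * (1/2^m * had m j l)) *\<^sub>R X l)"
        by (simp add: scaleR_sum_right sum_distrib_left mult.assoc)
      finally show ?thesis .
    qed
    have C: "(\<Sum>j<2^m. (1/2^m * had m i j) * (gam p m j l * sqrt (Psym p m l)))
           = (\<Sum>j<2^m. psi p m i * D i j * (1/2^m * had m j l))" for l
    proof -
      have "(\<Sum>j<2^m. (1/2^m * had m i j) * (gam p m j l * sqrt (Psym p m l)))
          = (\<Sum>j<2^m. \<Prod>k<m. F k (nbit i k) (nbit j k) (nbit l k))"
        unfolding F_def prod.distrib
        by (rule sum.cong) (simp_all add: had_def gam_def Psym_def sqrt_prod power_one_over mult_ac)
      also have "\<dots> = (\<Prod>k<m. F k (nbit i k) 0 (nbit l k) + F k (nbit i k) 1 (nbit l k))"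
        by (rule sum_prod_bits)
      also have "\<dots> = (\<Prod>k<m. G k (nbit i k) 0 (nbit l k) + G k (nbit i k) 1 (nbit l k))"
        by (rule prod.cong) (rule refl, rule FG, simp_all add: nbit_lt2)
      also have "\<dots> = (\<Sum>j<2^m. \<Prod>k<m. G k (nbit i k) (nbit j k) (nbit l k))"
        by (rule sum_prod_bits[symmetric])
      also have "\<dots> = (\<Sum>j<2^m. psi p m i * D i j * (1/2^m * had m j l))"
        unfolding G_def prod.distrib
        by (rule sum.cong) (simp_all add: D_def D_prod psi_prod had_def power_one_over mult_ac)
      finally show ?thesis .
    qed
    show ?thesis unfolding L R using C by simp
  qed
  have part2: "hadamard_tr m X j = (\<Sum>i<2 ^ m. ((1 / psi p m i) * E i j) *\<^sub>R hadamard_tr m (ring_tr p m X) i)"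
    if j: "j < 2^m" for j
  proof -
    have "(\<Sum>i<2 ^ m. ((1 / psi p m i) * E i j) *\<^sub>R hadamard_tr m (ring_tr p m X) i)
        = (\<Sum>i<2 ^ m. E i j *\<^sub>R (\<Sum>l<2 ^ m. D i l *\<^sub>R hadamard_tr m X l))"
      by (rule sum.cong) (simp_all add: part1 psi_nz)
    also have "\<dots> = (\<Sum>l<2^m. (\<Sum>i<2^m. E i j * D i l) *\<^sub>R hadamard_tr m X l)"
      by (rule lin)
    also have "\<dots> = (\<Sum>l<2^m. (if j = l then 1 else 0) *\<^sub>R hadamard_tr m X l)"
    proof (rule sum.cong)
      fix l :: nat assume l: "l \<in> {..<2^m}"
      have "(\<Sum>i<2^m. E i j * D i l)
          = (\<Sum>i<2^m. \<Prod>k<m. (if nbit i k \<noteq> nbit j k then PC p k (nbit i k) - PC p k 0 else 1)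
                 * (if nbit l k \<noteq> nbit i k then PC p k 0 - PC p k (nbit l k) else 1))"
        by (rule sum.cong) (simp_all add: E_def D_def D_prod prod.distrib)
      also have "\<dots> = (\<Prod>k<m. (if 0 \<noteq> nbit j k then PC p k 0 - PC p k 0 else 1)
                 * (if nbit l k \<noteq> 0 then PC p k 0 - PC p k (nbit l k) else 1)
               + (if 1 \<noteq> nbit j k then PC p k 1 - PC p k 0 else 1)
                 * (if nbit l k \<noteq> 1 then PC p k 0 - PC p k (nbit l k) else 1))"
        by (rule sum_prod_bits[where f = "\<lambda>k y. (if y \<noteq> nbit j k then PC p k y - PC p k 0 else 1)
                 * (if nbit l k \<noteq> y then PC p k 0 - PC p k (nbit l k) else 1)"])
      also have "\<dots> = (\<Prod>k<m. (if nbit j k = nbit l k then 1 else 0))"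
      proof (rule prod.cong)
        fix k
        have PCe: "PC p k = (\<lambda>b. if b = 0 then p k else 1 - p k)" by (simp add: PC_def fun_eq_iff)
        have n2: "{..<2::nat} = {0,1}" by auto
        show "(if 0 \<noteq> nbit j k then PC p k 0 - PC p k 0 else 1)
                 * (if nbit l k \<noteq> 0 then PC p k 0 - PC p k (nbit l k) else 1)
               + (if 1 \<noteq> nbit j k then PC p k 1 - PC p k 0 else 1)
                 * (if nbit l k \<noteq> 1 then PC p k 0 - PC p k (nbit l k) else 1)
             = (if nbit j k = nbit l k then 1 else 0)"
          using bit01[OF nbit_lt2[of j k]] bit01[OF nbit_lt2[of l k]] by (auto simp: PC_def)
      qed simp
      also have "\<dots> = (if j = l then 1 else 0)"
        using delta_prod[OF j] l by simp
      finally show "(\<Sum>i<2^m. E i j * D i l) *\<^sub>R hadamard_tr m X l = (if j = l then 1 else 0) *\<^sub>R hadamard_tr m X l"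
        by simp
    qed simp
    also have "\<dots> = hadamard_tr m X j"
      using j by (simp add: if_distrib[of "\<lambda>c. c *\<^sub>R _"] cong: if_cong)
    finally show ?thesis by simp
  qed
  show ?thesis using part1 part2 unfolding D_def E_def by blast
qed

end
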